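(* Let $L\in\mathbb Z^+$ and let $\mathcal C$ be a linear $[n,k]$ MDS code over $F$ with $k<n$, which is $(\tau,L)$-list decodable for some $\tau\in\mathbb Z_{\ge0}$. Then $\tau\le\frac{L(n-k)}{L+1}$ in each of the following cases: (a) $k\ge L$; (b) $k\ge2$ and $n\ge(L+1)h+k$, where $h$ is the smallest nonnegative integer with $\binom{k+h}{k-1}\ge L$; (c) $k\ge2$ and $n-k\equiv 0,\ L-1,$ or $L\pmod{L+1}$; (d) $n-k-1\le L\le\binom{n-1}{k-1}$.
   Context: $F=\mathrm{GF}(q)$. For $L\in\mathbb Z^+$ and $\tau\in\mathbb Z_{\ge0}$, a code $\mathcal C\subseteq F^n$ is $(\tau,L)$-list decodable if for every $y\in F^n$ at most $L$ codewords of $\mathcal C$ lie at Hamming distance at most $\tau$ from $y$. *)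

theory Defs
  imports "HOL-Analysis.Analysis"
begin

text \<open>Vectors of F^n are represented as 'a ^ 'n with n = CARD('n).
  Hamming distance: number of coordinates where x and y differ.\<close>
definition hamming_dist :: "'a ^ 'n \<Rightarrow> 'a ^ 'n \<Rightarrow> nat" where
  "hamming_dist x y = card {i. x $ i \<noteq> y $ i}"

definition linear_code :: "('a::field ^ 'n) set \<Rightarrow> nat \<Rightarrow> bool" where
  "linear_code C k \<longleftrightarrow> vec.subspace C \<and> vec.dim C = k"

text \<open>MDS: minimum distance n - k + 1 (distinct codewords differ in at least n-k+1 places;
  the reverse inequality is the Singleton bound).\<close>
definition mds_code :: "('a::field ^ 'n) set \<Rightarrow> nat \<Rightarrow> bool" where
  "mds_code C k \<longleftrightarrow> linear_code C k \<and>
     (\<forall>x\<in>C. \<forall>y\<in>C. x \<noteq> y \<longrightarrow> CARD('n) - k + 1 \<le> hamming_dist x y)"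

definition list_decodable :: "('a ^ 'n) set \<Rightarrow> nat \<Rightarrow> nat \<Rightarrow> bool" where
  "list_decodable C \<tau> L \<longleftrightarrow> (\<forall>y. card {c\<in>C. hamming_dist c y \<le> \<tau>} \<le> L)"

end

theory Submission imports Defs begin

lemma restrict_linear:
  "Vector_Spaces.linear (*s) (*s) (\<lambda>x::'a::field^'n. \<chi> j. if j \<in> A then x$j else 0)"
  by (auto simp: Vector_Spaces.linear_iff vec.vector_space_axioms vec_eq_iff)

lemma K1:
  fixes C :: "('a::field ^ 'n) set"
  assumes "vec.subspace C" "card A < vec.dim C"
  shows "\<exists>w\<in>C. w \<noteq> 0 \<and> (\<forall>j\<in>A. w$j = 0)"
proof (rule ccontr)
  assume H: "\<not> ?thesis"
  define f where "f = (\<lambda>x::'a^'n. \<chi> j. if j \<in> A then x$j else 0)"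
  have lin: "Vector_Spaces.linear (*s) (*s) f" unfolding f_def by (rule restrict_linear)
  have sp: "vec.span C = C" using assms(1) by (simp add: vec.span_eq_iff)
  have inj: "inj_on f (vec.span C)"
  proof (rule inj_onI)
    fix u v assume u: "u \<in> vec.span C" and v: "v \<in> vec.span C" and e: "f u = f v"
    have "u - v \<in> C" using u v sp assms(1) by (simp add: vec.subspace_diff)
    moreover have "\<forall>j\<in>A. (u - v)$j = 0"
    proof
      fix j assume j: "j \<in> A"
      have "f u $ j = f v $ j" using e by simp
      with j show "(u - v)$j = 0" by (simp add: f_def)
    qed
    ultimately have "u - v = 0" using H by blast
    then show "u = v" by simp
  qed
  have "vec.dim (f ` C) = vec.dim C" by (rule vec.dim_image_eq[OF lin inj])
  moreover have "f ` C \<subseteq> {x. \<forall>i. i \<notin> A \<longrightarrow> x$i = 0}" unfolding f_def by auto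
  then have "vec.dim (f ` C) \<le> vec.dim {x::'a^'n. \<forall>i. i \<notin> A \<longrightarrow> x$i = 0}"
    by (rule vec.dim_subset)
  then have "vec.dim (f ` C) \<le> card A" by (simp add: dim_substandard_cart)
  ultimately show False using assms(2) by simp
qed

lemma mds_nz:
  fixes C :: "('a::field ^ 'n) set"
  assumes mds: "mds_code C k" and w: "w \<in> C" "w \<noteq> 0" and A: "card A = k - 1"
    and van: "\<forall>j\<in>A. w$j = 0" and j: "j \<notin> A" and k: "k \<ge> 1"
  shows "w$j \<noteq> 0"
proof
  assume wj: "w$j = 0"
  have sub: "vec.subspace C" using mds by (simp add: mds_code_def linear_code_def)
  have "0 \<in> C" using sub by (rule vec.subspace_0)
  hence "CARD('n) - k + 1 \<le> hamming_dist w 0" using mds w unfolding mds_code_def by blast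
  moreover have "{i. w$i \<noteq> 0} \<subseteq> UNIV - insert j A" using van wj by auto
  hence "card {i. w$i \<noteq> 0} \<le> card (UNIV - insert j A)" by (intro card_mono) auto
  moreover have "card (insert j A) = k" using A j k finite[of A] by simp
  hence "card (UNIV - insert j A :: 'n set) = CARD('n) - k"
    by (simp add: card_Diff_subset)
  ultimately show False by (simp add: hamming_dist_def)
qed

lemma core:
  fixes C :: "('a::{finite,field} ^ 'n) set"
  assumes mds: "mds_code C k" and k1: "k \<ge> 1"
    and Z: "card (Z::'n set) = z" and Lz: "L \<le> z choose (k - 1)"
    and size: "L * s + 1 + z \<le> CARD('n)"
    and ts: "t + s + k = CARD('n)" and st: "L * s + 1 \<le> t"
  shows "\<exists>y. L + 1 \<le> card {c\<in>C. hamming_dist c y \<le> t}"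
proof -
  have sub: "vec.subspace C" and dimC: "vec.dim C = k"
    using mds by (auto simp: mds_code_def linear_code_def)
  let ?S = "{A. A \<subseteq> Z \<and> card A = k - 1}"
  have "card ?S = z choose (k-1)" using n_subsets[of Z "k-1"] Z by simp
  then obtain AA where AA: "AA \<subseteq> ?S" "card AA = L" "finite AA"
    using obtain_subset_with_card_n[of L ?S] Lz by metis
  obtain e where e: "bij_betw e {0..<L} AA" using ex_bij_betw_nat_finite[OF AA(3)] AA(2) by auto
  have eZ: "e i \<subseteq> Z \<and> card (e i) = k - 1" if "i < L" for i
  proof -
    have "e i \<in> AA" using e that by (auto simp: bij_betw_def)
    then show ?thesis using AA(1) by blast
  qed
  define W where "W = UNIV - Z"
  have cW: "card W = CARD('n) - z" using Z by (simp add: W_def card_Diff_subset)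
  let ?N = "{0..<CARD('n) - z}"
  obtain g where g: "bij_betw g ?N W" using ex_bij_betw_nat_finite[of W] cW by auto
  define x where "x = g (L * s)"
  have xW: "x \<in> W" using g size by (auto simp: x_def bij_betw_def)
  have "\<forall>i. \<exists>w. i < L \<longrightarrow> (w \<in> C \<and> w \<noteq> 0 \<and> (\<forall>j\<in>e i. w$j = 0))"
  proof
    fix i show "\<exists>w. i < L \<longrightarrow> (w \<in> C \<and> w \<noteq> 0 \<and> (\<forall>j\<in>e i. w$j = 0))"
    proof (cases "i < L")
      case True
      then have "card (e i) < vec.dim C" using eZ dimC k1 by simp
      then show ?thesis using K1[OF sub] by blast
    qed simp
  qed
  then obtain w where w: "\<And>i. i<L \<Longrightarrow> w i \<in> C \<and> w i \<noteq> 0 \<and> (\<forall>j\<in>e i. w i $j = 0)"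
    by metis
  have wnz: "w i $ j \<noteq> 0" if "i < L" "j \<notin> e i" for i j
    using mds_nz[OF mds, of "w i" "e i" j] w[OF that(1)] eZ[OF that(1)] k1 that(2) by blast
  have wx: "w i $ x \<noteq> 0" if "i < L" for i
    using wnz[OF that] xW eZ[OF that] by (auto simp: W_def)
  define c where "c i = (1 / (w i $ x)) *s w i" for i
  have cC: "c i \<in> C" if "i < L" for i
    using w[OF that] sub by (simp add: c_def vec.subspace_scale)
  have cx: "c i $ x = 1" if "i < L" for i using wx[OF that] by (simp add: c_def)
  have c0: "c i $ j = 0" if "i < L" "j \<in> e i" for i j using w[OF that(1)] that(2) by (simp add: c_def)
  have cnz: "c i $ j \<noteq> 0" if "i < L" "j \<notin> e i" for i j
    using wnz[OF that] wx[OF that(1)] by (simp add: c_def)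
  define y where "y = (\<chi> j. if j \<in> W \<and> inv_into ?N g j < L * s then c (inv_into ?N g j div s) $ j
                        else if j = x then 1 else 0)"
  have invx: "inv_into ?N g x = L * s" using g size
    by (auto simp: x_def bij_betw_def inv_into_f_f)
  have yx: "y $ x = 1" using xW invx by (simp add: y_def)
  have di: "hamming_dist (c i) y \<le> t" if i: "i < L" for i
  proof -
    let ?B = "(Z - e i) \<union> g ` (?N - {i * s..<i * s+s} - {L * s})"
    have isL: "i * s+s \<le> L * s" using i by (metis Suc_leI add.commute mult_Suc mult_le_mono1)
    have "{j. c i $ j \<noteq> y $ j} \<subseteq> ?B"
    proof
      fix j assume "j \<in> {j. c i $ j \<noteq> y $ j}"
      hence ne: "c i $ j \<noteq> y $ j" by simp
      show "j \<in> ?B"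
      proof (cases "j \<in> Z")
        case True
        then have "y $ j = 0" using xW by (auto simp: y_def W_def)
        then show ?thesis using ne c0[OF i] True by auto
      next
        case False
        hence jW: "j \<in> W" by (simp add: W_def)
        define m where "m = inv_into ?N g j"
        have m: "m \<in> ?N" "g m = j" using g jW
          by (auto simp: m_def bij_betw_def inv_into_into f_inv_into_f)
        have "m \<notin> {i * s..<i * s+s}"
        proof
          assume mi: "m \<in> {i * s..<i * s+s}"
          have mL: "m < L * s" using mi isL by simp
          have "m div s = i" using mi by (intro div_nat_eqI) (auto simp: algebra_simps)
          hence "y$j = c i $ j" using jW mL by (simp add: y_def m_def[symmetric])
          with ne show False by simp
        qed
        moreover have "m \<noteq> L * s"
        proof
          assume "m = L * s"
          then have "j = x" using m by (simp add: x_def)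
          then show False using ne yx cx[OF i] by simp
        qed
        ultimately show ?thesis using m by auto
      qed
    qed
    hence "hamming_dist (c i) y \<le> card ?B" unfolding hamming_dist_def by (intro card_mono) auto
    also have "card ?B \<le> card (Z - e i) + card (g ` (?N - {i * s..<i * s+s} - {L * s}))"
      by (rule card_Un_le)
    also have "card (Z - e i) = z - (k-1)" using eZ[OF i] Z by (simp add: card_Diff_subset)
    also have "card (g ` (?N - {i * s..<i * s+s} - {L * s})) \<le> card (?N - {i * s..<i * s+s} - {L * s})"
      by (rule card_image_le) simp
    also have "card (?N - {i * s..<i * s+s} - {L * s}) = (CARD('n) - z) - s - 1"
    proof -
      have "{i * s..<i * s+s} \<subseteq> ?N" using isL size by auto
      hence "card (?N - {i * s..<i * s+s}) = (CARD('n) - z) - s" by (simp add: card_Diff_subset)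
      moreover have "L * s \<in> ?N - {i * s..<i * s+s}" using isL size by auto
      ultimately show ?thesis by simp
    qed
    finally have "hamming_dist (c i) y \<le> z - (k - 1) + (CARD('n) - z - s - 1)" by simp
    moreover have "k - 1 \<le> z" using eZ[OF i] Z card_mono[of Z "e i"] by auto
    ultimately show ?thesis using size ts k1 isL by linarith
  qed
  have d0: "hamming_dist 0 y \<le> t"
  proof -
    have "{j. (0::'a^'n) $ j \<noteq> y $ j} \<subseteq> g ` {0..L * s}"
    proof
      fix j assume "j \<in> {j. (0::'a^'n) $ j \<noteq> y $ j}"
      hence ne: "y $ j \<noteq> 0" by simp
      show "j \<in> g ` {0..L * s}"
      proof (cases "j = x")
        case True then show ?thesis by (simp add: x_def)
      next
        case False
        then have jW: "j \<in> W" and lt: "inv_into ?N g j < L * s" using ne by (auto simp: y_def split: if_splits)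
        have "g (inv_into ?N g j) = j" using g jW by (auto simp: bij_betw_def f_inv_into_f)
        then show ?thesis using lt by (metis atLeastAtMost_iff image_eqI less_imp_le zero_le)
      qed
    qed
    hence "hamming_dist 0 y \<le> card (g ` {0..L * s})" unfolding hamming_dist_def by (intro card_mono) auto
    also have "\<dots> \<le> card {0..L * s}" by (rule card_image_le) simp
    finally show ?thesis using st by simp
  qed
  have inj: "inj_on c {0..<L}"
  proof (rule inj_onI)
    fix i i' assume i: "i \<in> {0..<L}" "i' \<in> {0..<L}" and eq: "c i = c i'"
    show "i = i'"
    proof (rule ccontr)
      assume "i \<noteq> i'"
      then have ne: "e i \<noteq> e i'" using e i by (auto simp: bij_betw_def inj_on_def)
      have "\<not> e i' \<subseteq> e i"
      proof
        assume "e i' \<subseteq> e i"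
        moreover have "card (e i') = card (e i)" using eZ i by simp
        ultimately have "e i' = e i" by (intro card_subset_eq) auto
        with ne show False by simp
      qed
      then obtain a where a: "a \<in> e i'" "a \<notin> e i" by auto
      have "c i $ a \<noteq> 0" using cnz i a by simp
      moreover have "c i' $ a = 0" using c0 i a by simp
      ultimately show False using eq by simp
    qed
  qed
  have n0: "0 \<notin> c ` {0..<L}"
  proof
    assume "0 \<in> c ` {0..<L}"
    then obtain i where "i < L" "c i = 0" by auto
    then show False using cx by (metis vec_lambda_beta zero_index zero_neq_one)
  qed
  let ?T = "insert 0 (c ` {0..<L})"
  have cT: "card ?T = L + 1" using inj n0 by (simp add: card_image)
  have "?T \<subseteq> {c\<in>C. hamming_dist c y \<le> t}" using cC di d0 vec.subspace_0[OF sub] by auto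
  hence "card ?T \<le> card {c\<in>C. hamming_dist c y \<le> t}" by (intro card_mono) auto
  thus ?thesis using cT by auto
qed
lemma arith_key:
  fixes L D :: nat assumes L: "L \<ge> 1" and D: "D \<ge> 1"
  shows "D - L * (D - (L*D div (L+1) + 1)) =
         D div (L+1) + (if D mod (L+1) = 0 then L else D mod (L+1))"
proof -
  define m where "m = D div (L+1)"
  define r where "r = D mod (L+1)"
  have Dmr: "D = (L+1)*m + r" unfolding m_def r_def by (metis div_mult_mod_eq mult.commute)
  have rl: "r < L+1" by (simp add: r_def)
  have md: "D div (L+1) = m" and rd: "D mod (L+1) = r" by (simp_all add: m_def r_def)
  show ?thesis
  proof (cases "r = 0")
    case True
    then obtain m' where m': "m = Suc m'" using Dmr D by (cases m) auto
    have LD: "L*D = (L+1)*(L*m)" using Dmr True by (simp add: algebra_simps)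
    have "(L+1)*(L*m) div (L+1) = L*m" by (rule nonzero_mult_div_cancel_left) simp
    hence "L*D div (L+1) = L*m" using LD by metis
    moreover have "D - (L*m + 1) = m'" using Dmr True m' by (simp add: algebra_simps)
    moreover have "D - L*m' = m + L" using Dmr True m' by (simp add: algebra_simps)
    ultimately show ?thesis unfolding md rd using True by simp
  next
    case False
    then obtain r' where r': "r = Suc r'" by (cases r) auto
    have LD: "L*D = (L+1)*(L*m + r') + (L - r')" using Dmr r' rl
      by (simp add: algebra_simps)
    have "L*D div (L+1) = L*m + r'"
      by (rule div_nat_eqI) (use LD rl r' in \<open>simp_all add: algebra_simps\<close>)
    moreover have "D - (L*m + r' + 1) = m" using Dmr r' by (simp add: algebra_simps)
    moreover have "D - L*m = m + r" using Dmr by (simp add: algebra_simps)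
    ultimately show ?thesis unfolding md rd using False by simp
  qed
qed

theorem mainTheorem5:
  fixes C :: "('a::{finite,field} ^ 'n) set" and n k L \<tau> :: nat
  assumes "n = CARD('n)"
    and "L \<ge> 1"
    and "mds_code C k"
    and "k < n"
    and "list_decodable C \<tau> L"
    and "k \<ge> L
         \<or> (k \<ge> 2 \<and> n \<ge> (L + 1) * (LEAST h. L \<le> (k + h) choose (k - 1)) + k)
         \<or> (k \<ge> 2 \<and> (n - k) mod (L + 1) \<in> {0, L - 1, L})
         \<or> (k \<ge> 1 \<and> n - k - 1 \<le> L \<and> L \<le> (n - 1) choose (k - 1))"
  shows "real \<tau> \<le> real L * real (n - k) / real (L + 1)"
proof (rule ccontr)
  assume neg: "\<not> real \<tau> \<le> real L * real (n - k) / real (L + 1)"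
  define D where "D = n - k"
  have D1: "D \<ge> 1" using assms(4) D_def by simp
  have k1: "k \<ge> 1" using assms(6) assms(2) by auto
  have "real L * real D / real (L+1) < real \<tau>" using neg by (simp add: D_def)
  hence "real L * real D < real \<tau> * real (L+1)" by (simp add: pos_divide_less_eq)
  hence lt: "L * D < \<tau> * (L+1)" by (metis of_nat_less_iff of_nat_mult)
  define t where "t = L*D div (L+1) + 1"
  have "L*D div (L+1) < \<tau>" using lt by (simp add: div_less_iff_less_mult)
  hence tt: "t \<le> \<tau>" by (simp add: t_def)
  have "L*D < D*(L+1)" using D1 by simp
  hence "L*D div (L+1) < D" by (simp add: div_less_iff_less_mult)
  hence tD: "t \<le> D" by (simp add: t_def)
  define s where "s = D - t"
  have "L*D = (L+1)*(L*D div (L+1)) + L*D mod (L+1)" by (metis div_mult_mod_eq mult.commute)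
  moreover have "L*D mod (L+1) < L+1" by simp
  moreover have "(L+1)*t = (L+1)*(L*D div (L+1)) + (L+1)"
    by (simp only: t_def distrib_left mult_1_right)
  ultimately have "L*D < (L+1)*t" by linarith
  hence "L*D < L*t + t" by (simp add: algebra_simps)
  moreover have "L * s = L*D - L*t" by (simp add: s_def diff_mult_distrib2)
  moreover have "L*t \<le> L*D" using tD by simp
  ultimately have st: "L * s + 1 \<le> t" by linarith
  define z where "z = n - L * s - 1"
  define ex where "ex = (if D mod (L+1) = 0 then L else D mod (L+1))"
  have "D - L * s = D div (L+1) + ex"
    using arith_key[OF assms(2) D1] unfolding s_def t_def ex_def .
  hence keyz: "z + 1 = k + D div (L+1) + ex"
    unfolding z_def using st tD assms(4) D_def by linarith
  have ex1: "ex \<ge> 1" using assms(2) by (auto simp: ex_def)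
  have size: "L * s + 1 + z \<le> n" unfolding z_def using st tD assms(4) D_def by linarith
  have ts: "t + s + k = n" unfolding s_def using tD D_def assms(4) by linarith
  have Lz: "L \<le> z choose (k - 1)"
    using assms(6)
  proof (elim disjE)
    assume a: "k \<ge> L"
    show ?thesis
    proof (cases "k = 1")
      case True then show ?thesis using a by simp
    next
      case False
      have "z \<le> z choose (k-1)" by (rule upper_le_binomial) (use False k1 keyz ex1 in linarith)+
      then show ?thesis using a keyz ex1 by linarith
    qed
  next
    assume b: "k \<ge> 2 \<and> n \<ge> (L + 1) * (LEAST h. L \<le> (k + h) choose (k - 1)) + k"
    define h0 where "h0 = (LEAST h. L \<le> (k + h) choose (k - 1))"
    have "k + L \<le> (k + L) choose (k-1)" by (rule upper_le_binomial) (use b in linarith)+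
    hence "L \<le> (k + L) choose (k-1)" by linarith
    hence h0: "L \<le> (k + h0) choose (k-1)" unfolding h0_def by (rule LeastI)
    have "(L + 1) * h0 + k \<le> n" using b by (simp add: h0_def)
    hence "(L+1)*h0 \<le> D" using D_def by linarith
    hence "(L+1)*h0 div (L+1) \<le> D div (L+1)" by (rule div_le_mono)
    moreover have "(L+1)*h0 div (L+1) = h0" by (rule nonzero_mult_div_cancel_left) simp
    ultimately have "h0 \<le> D div (L+1)" by simp
    hence "k + h0 \<le> z" using keyz ex1 by linarith
    hence "(k + h0) choose (k-1) \<le> z choose (k-1)" by (rule binomial_right_mono)
    then show ?thesis using h0 by linarith
  next
    assume c: "k \<ge> 2 \<and> (n - k) mod (L + 1) \<in> {0, L - 1, L}"
    have "L \<le> z"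
    proof -
      have "D mod (L+1) \<in> {0, L - 1, L}" using c D_def by simp
      then have "ex \<ge> L - 1" by (auto simp: ex_def)
      then show ?thesis using keyz c by linarith
    qed
    moreover have "z \<le> z choose (k-1)" by (rule upper_le_binomial) (use c keyz ex1 in linarith)+
    ultimately show ?thesis by linarith
  next
    assume d: "k \<ge> 1 \<and> n - k - 1 \<le> L \<and> L \<le> (n - 1) choose (k - 1)"
    have "z = n - 1"
    proof (cases "D \<le> L")
      case True
      then have "D div (L+1) = 0" "D mod (L+1) = D" by simp_all
      then show ?thesis using keyz D1 D_def assms(4) by (simp add: ex_def)
    next
      case False
      then have DL: "D = L + 1" using d D_def by linarith
      then have "D div (L+1) = 1" "D mod (L+1) = 0" by simp_all
      then show ?thesis using keyz DL D_def assms(4) by (simp add: ex_def)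
    qed
    then show ?thesis using d by simp
  qed
  obtain Z :: "'n set" where Z: "card Z = z"
    using obtain_subset_with_card_n[of z "UNIV::'n set"] size assms(1) by auto
  obtain y where y: "L + 1 \<le> card {c\<in>C. hamming_dist c y \<le> t}"
    using core[OF assms(3) k1 Z Lz, of s t] size ts st assms(1) by auto
  moreover have "card {c\<in>C. hamming_dist c y \<le> t} \<le> card {c\<in>C. hamming_dist c y \<le> \<tau>}"
    by (rule card_mono) (use tt in auto)
  moreover have "card {c\<in>C. hamming_dist c y \<le> \<tau>} \<le> L"
    using assms(5) by (simp add: list_decodable_def)
  ultimately show False by linarith
qed

end
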